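(* Let $\mathcal{R}$ be a left-linear TRS. If there is a confluent TRS $\mathcal{C}\subseteq\mathcal{R}$ such that $t\leftrightarrow^*_\mathcal{C} u$ for every parallel critical pair $(t,u)$ between $\mathcal{R}$ and $\mathcal{R}$, then $\mathcal{R}$ is confluent.
   Context: A TRS is a set of rules $\ell\to r$ with $\ell\notin\mathcal{V}$, $\mathcal{V}ar(r)\subseteq\mathcal{V}ar(\ell)$; left-linear: no variable occurs twice in a left-hand side; confluent: ${}_\mathcal{R}\!\!\leftarrow^*\cdot\to_\mathcal{R}^*\subseteq\to_\mathcal{R}^*\cdot{}_\mathcal{R}\!\!\leftarrow^*$; $\leftrightarrow^*_\mathcal{C}$ is the reflexive-transitive-symmetric closure of $\to_\mathcal{C}$. Positions $p,q$ are parallel if neither is a prefix of the other; $\mathcal{P}os_\mathcal{F}(\ell)$ denotes the function-symbol positions of $\ell$; $\epsilon$ is the root. Parallel critical pair between $\mathcal{R}$ and $\mathcal{S}$: let $\ell\to r$ be a variant (renaming) of an $\mathcal{S}$-rule, $P\subseteq\mathcal{P}os_\mathcal{F}(\ell)$ a non-empty set of pairwise parallel positions, $\ell_p\to r_p$ ($p\in P$) variants of $\mathcal{R}$-rules, all these rules pairwise variable-disjoint, $\sigma$ a most general unifier of $\{\ell_p\approx\ell|_p\}_{p\in P}$, and if $P=\{\epsilon\}$ then $\ell_\epsilon\to r_\epsilon$ is not a variant of $\ell\to r$. Then $((\ell\sigma)[r_p\sigma]_{p\in P}, r\sigma)$ is a parallel critical pair. *)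

theory Defs
  imports Main
begin

datatype ('f, 'v) "term" = Var 'v | Fun 'f "('f, 'v) term list"

type_synonym ('f, 'v) rule = "('f, 'v) term \<times> ('f, 'v) term"
type_synonym ('f, 'v) trs = "('f, 'v) rule set"
type_synonym ('f, 'v) subst = "'v \<Rightarrow> ('f, 'v) term"
type_synonym pos = "nat list"

fun vars :: "('f, 'v) term \<Rightarrow> 'v set" where
  "vars (Var x) = {x}"
| "vars (Fun f ts) = (\<Union>t \<in> set ts. vars t)"

fun subst :: "('f, 'v) term \<Rightarrow> ('f, 'v) subst \<Rightarrow> ('f, 'v) term" where
  "subst (Var x) \<sigma> = \<sigma> x"
| "subst (Fun f ts) \<sigma> = Fun f (map (\<lambda>t. subst t \<sigma>) ts)"

fun subt_at :: "('f, 'v) term \<Rightarrow> pos \<Rightarrow> ('f, 'v) term" where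
  "subt_at t [] = t"
| "subt_at (Fun f ts) (i # p) = subt_at (ts ! i) p"
| "subt_at (Var x) (i # p) = Var x"

fun valid_pos :: "('f, 'v) term \<Rightarrow> pos \<Rightarrow> bool" where
  "valid_pos t [] = True"
| "valid_pos (Fun f ts) (i # p) = (i < length ts \<and> valid_pos (ts ! i) p)"
| "valid_pos (Var x) (i # p) = False"

definition poss :: "('f, 'v) term \<Rightarrow> pos set" where
  "poss t = {p. valid_pos t p}"

definition fun_poss :: "('f, 'v) term \<Rightarrow> pos set" where
  "fun_poss t = {p. p \<in> poss t \<and> (\<forall>x. subt_at t p \<noteq> Var x)}"

fun replace_at :: "('f, 'v) term \<Rightarrow> pos \<Rightarrow> ('f, 'v) term \<Rightarrow> ('f, 'v) term" where
  "replace_at t [] u = u"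
| "replace_at (Fun f ts) (i # p) u = Fun f (ts[i := replace_at (ts ! i) p u])"
| "replace_at (Var x) (i # p) u = Var x"

text \<open>Simultaneous replacement at a set of (pairwise parallel) positions:
  par_repl t P g is t with the subterm at each p in P replaced by g p.\<close>

function par_repl :: "('f, 'v) term \<Rightarrow> pos set \<Rightarrow> (pos \<Rightarrow> ('f, 'v) term) \<Rightarrow> ('f, 'v) term" where
  "par_repl t P g =
     (if [] \<in> P then g []
      else (case t of
              Var x \<Rightarrow> Var x
            | Fun f ts \<Rightarrow> Fun f (map (\<lambda>(i, s). par_repl s {q. i # q \<in> P} (\<lambda>q. g (i # q)))
                                     (zip [0..<length ts] ts))))"
  by pat_completeness auto
termination
  by (relation "measure (\<lambda>(t, P, g). size t)")
     (auto dest!: set_zip_rightD simp: less_Suc_eq_le intro!: size_list_estimation')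

definition parallel :: "pos \<Rightarrow> pos \<Rightarrow> bool" where
  "parallel p q \<longleftrightarrow> \<not> (\<exists>w. q = p @ w) \<and> \<not> (\<exists>w. p = q @ w)"

definition rstep :: "('f, 'v) trs \<Rightarrow> ('f, 'v) term rel" where
  "rstep R = {(s, t). \<exists>l r p \<sigma>. (l, r) \<in> R \<and> p \<in> poss s \<and>
                 subt_at s p = subst l \<sigma> \<and> t = replace_at s p (subst r \<sigma>)}"

definition wf_trs :: "('f, 'v) trs \<Rightarrow> bool" where
  "wf_trs R \<longleftrightarrow> (\<forall>(l, r) \<in> R. (\<forall>x. l \<noteq> Var x) \<and> vars r \<subseteq> vars l)"

fun linear_term :: "('f, 'v) term \<Rightarrow> bool" where
  "linear_term (Var x) = True"
| "linear_term (Fun f ts) =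
     ((\<forall>t \<in> set ts. linear_term t) \<and>
      (\<forall>i j. i < j \<and> j < length ts \<longrightarrow> vars (ts ! i) \<inter> vars (ts ! j) = {}))"

definition left_linear :: "('f, 'v) trs \<Rightarrow> bool" where
  "left_linear R \<longleftrightarrow> (\<forall>(l, r) \<in> R. linear_term l)"

definition CR :: "('f, 'v) trs \<Rightarrow> bool" where
  "CR R \<longleftrightarrow> ((rstep R)\<inverse>)\<^sup>* O (rstep R)\<^sup>* \<subseteq> (rstep R)\<^sup>* O ((rstep R)\<inverse>)\<^sup>*"

definition conv :: "('f, 'v) trs \<Rightarrow> ('f, 'v) term rel" where
  "conv C = (rstep C \<union> (rstep C)\<inverse>)\<^sup>*"

definition is_variant :: "('f, 'v) rule \<Rightarrow> ('f, 'v) rule \<Rightarrow> bool" where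
  "is_variant rl' rl \<longleftrightarrow> (\<exists>\<rho>. bij \<rho> \<and> fst rl' = subst (fst rl) (Var \<circ> \<rho>)
                                     \<and> snd rl' = subst (snd rl) (Var \<circ> \<rho>))"

definition variant_of :: "('f, 'v) rule \<Rightarrow> ('f, 'v) trs \<Rightarrow> bool" where
  "variant_of rl R \<longleftrightarrow> (\<exists>rl0 \<in> R. is_variant rl rl0)"

definition rule_vars :: "('f, 'v) rule \<Rightarrow> 'v set" where
  "rule_vars rl = vars (fst rl) \<union> vars (snd rl)"

definition unifier :: "('f, 'v) subst \<Rightarrow> (('f, 'v) term \<times> ('f, 'v) term) set \<Rightarrow> bool" where
  "unifier \<sigma> E \<longleftrightarrow> (\<forall>(s, t) \<in> E. subst s \<sigma> = subst t \<sigma>)"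

definition is_mgu :: "('f, 'v) subst \<Rightarrow> (('f, 'v) term \<times> ('f, 'v) term) set \<Rightarrow> bool" where
  "is_mgu \<sigma> E \<longleftrightarrow> unifier \<sigma> E \<and>
     (\<forall>\<tau>. unifier \<tau> E \<longrightarrow> (\<exists>\<delta>. \<forall>x. \<tau> x = subst (\<sigma> x) \<delta>))"

definition pcp :: "('f, 'v) trs \<Rightarrow> ('f, 'v) trs \<Rightarrow> ('f, 'v) term rel" where
  "pcp R S = {(t, u). \<exists>l r P rls \<sigma>.
      variant_of (l, r) S \<and>
      P \<noteq> {} \<and> P \<subseteq> fun_poss l \<and>
      (\<forall>p \<in> P. \<forall>q \<in> P. p \<noteq> q \<longrightarrow> parallel p q) \<and>
      (\<forall>p \<in> P. variant_of (rls p) R) \<and>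
      (\<forall>p \<in> P. rule_vars (rls p) \<inter> rule_vars (l, r) = {}) \<and>
      (\<forall>p \<in> P. \<forall>q \<in> P. p \<noteq> q \<longrightarrow> rule_vars (rls p) \<inter> rule_vars (rls q) = {}) \<and>
      is_mgu \<sigma> {(fst (rls p), subt_at l p) | p. p \<in> P} \<and>
      (P = {[]} \<longrightarrow> \<not> is_variant (rls []) (l, r)) \<and>
      t = par_repl (subst l \<sigma>) P (\<lambda>p. subst (snd (rls p)) \<sigma>) \<and>
      u = subst r \<sigma>}"

end

theory Submission
  imports Defs
begin


lemma subst_subst: "subst (subst t \<sigma>) \<tau> = subst t (\<lambda>x. subst (\<sigma> x) \<tau>)"
  by (induction t) auto

lemma subst_cong: "(\<And>x. x \<in> vars t \<Longrightarrow> \<sigma> x = \<tau> x) \<Longrightarrow> subst t \<sigma> = subst t \<tau>"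
  by (induction t) auto

lemma subst_eq_vars: "subst t \<sigma> = subst t \<tau> \<Longrightarrow> x \<in> vars t \<Longrightarrow> \<sigma> x = \<tau> x"
  by (induction t) (auto simp: map_eq_conv)

lemma subst_Var[simp]: "subst t Var = t"
  by (induction t) (auto simp: map_idI)

lemma finite_vars[simp]: "finite (vars t)"
  by (induction t) auto

lemma vars_subst: "vars (subst t \<sigma>) = (\<Union>x\<in>vars t. vars (\<sigma> x))"
  by (induction t) auto

lemma valid_pos_subst: "valid_pos t p \<Longrightarrow> valid_pos (subst t \<sigma>) p \<and> subt_at (subst t \<sigma>) p = subst (subt_at t p) \<sigma>"
  by (induction t p rule: valid_pos.induct) auto

lemma vars_subt_at: "valid_pos t p \<Longrightarrow> vars (subt_at t p) \<subseteq> vars t"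
  by (induction t p rule: valid_pos.induct) force+

lemma valid_pos_bound: "valid_pos t p \<Longrightarrow> length p \<le> size t \<and> set p \<subseteq> {..<size t}"
proof (induction t p rule: valid_pos.induct)
  case (2 f ts i p)
  then have i: "i < length ts" and v: "valid_pos (ts ! i) p" by auto
  have "size (ts ! i) < size (Fun f ts)" using i
    using size_list_estimation'[OF nth_mem[OF i], of "size (ts!i)" size] by simp
  moreover have "length ts < size (Fun f ts)"
    by (induction ts) auto
  ultimately show ?case using 2 i by auto
qed auto

lemma finite_poss: "finite (poss t)"
proof -
  have "poss t \<subseteq> {p. set p \<subseteq> {..<size t} \<and> length p \<le> size t}"
    using valid_pos_bound by (auto simp: poss_def)
  moreover have "finite {p. set p \<subseteq> {..<size t} \<and> length p \<le> size t}"
    by (rule finite_lists_length_le) auto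
  ultimately show ?thesis by (rule finite_subset)
qed



inductive_set rsi :: "('f,'v) trs \<Rightarrow> ('f,'v) term rel" for S where
  root: "(l,r) \<in> S \<Longrightarrow> (subst l \<sigma>, subst r \<sigma>) \<in> rsi S"
| ctxt: "(s,t) \<in> rsi S \<Longrightarrow> (Fun f (ss1 @ s # ss2), Fun f (ss1 @ t # ss2)) \<in> rsi S"

lemma rstep_sub_rsi: "(s,t) \<in> rstep S \<Longrightarrow> (s,t) \<in> rsi S"
proof -
  have "valid_pos s p \<Longrightarrow> subt_at s p = subst l \<sigma> \<Longrightarrow> (l,r) \<in> S \<Longrightarrow> (s, replace_at s p (subst r \<sigma>)) \<in> rsi S" for p l r \<sigma>
  proof (induction p arbitrary: s)
    case Nil
    then show ?case by (auto intro: rsi.root)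
  next
    case (Cons i p)
    obtain f ss where s: "s = Fun f ss" and i: "i < length ss" and v: "valid_pos (ss!i) p"
      using Cons.prems(1) by (cases s) auto
    have IH: "(ss!i, replace_at (ss!i) p (subst r \<sigma>)) \<in> rsi S" using Cons s v by auto
    have e1: "ss = take i ss @ ss!i # drop (Suc i) ss" using i by (simp add: id_take_nth_drop)
    have e2: "ss[i := replace_at (ss!i) p (subst r \<sigma>)] = take i ss @ replace_at (ss!i) p (subst r \<sigma>) # drop (Suc i) ss"
      using i by (simp add: upd_conv_take_nth_drop)
    show ?case using rsi.ctxt[OF IH, of f "take i ss" "drop (Suc i) ss"] s e2 e1 by simp
  qed
  then show "(s,t) \<in> rstep S \<Longrightarrow> (s,t) \<in> rsi S" unfolding rstep_def poss_def by auto
qed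

lemma rsi_sub_rstep: "(s,t) \<in> rsi S \<Longrightarrow> (s,t) \<in> rstep S"
proof (induction rule: rsi.induct)
  case (root l r \<sigma>)
  have "[] \<in> poss (subst l \<sigma>)" by (simp add: poss_def)
  then show ?case unfolding rstep_def using root by fastforce
next
  case (ctxt s t f ss1 ss2)
  then obtain l r p \<sigma> where lr: "(l, r) \<in> S" "valid_pos s p" "subt_at s p = subst l \<sigma>"
     "t = replace_at s p (subst r \<sigma>)" unfolding rstep_def poss_def by auto
  have "valid_pos (Fun f (ss1@s#ss2)) (length ss1 # p)" "subt_at (Fun f (ss1@s#ss2)) (length ss1 # p) = subst l \<sigma>"
    "Fun f (ss1@t#ss2) = replace_at (Fun f (ss1@s#ss2)) (length ss1 # p) (subst r \<sigma>)"
    using lr by (auto simp: nth_append)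
  then show ?case using lr(1) unfolding rstep_def poss_def by blast
qed

lemma rstep_eq: "rstep S = rsi S"
  using rstep_sub_rsi rsi_sub_rstep by auto

lemma rsi_subst: "(s,t) \<in> rsi S \<Longrightarrow> (subst s \<delta>, subst t \<delta>) \<in> rsi S"
proof (induction rule: rsi.induct)
  case (root l r \<sigma>)
  then show ?case using rsi.root[OF root, of "\<lambda>x. subst (\<sigma> x) \<delta>"] by (simp add: subst_subst)
next
  case (ctxt s t f ss1 ss2)
  then show ?case using rsi.ctxt by fastforce
qed

definition ctxt_closed :: "('f,'v) term rel \<Rightarrow> bool" where
  "ctxt_closed Q \<longleftrightarrow> (\<forall>s t f ss1 ss2. (s,t) \<in> Q \<longrightarrow> (Fun f (ss1 @ s # ss2), Fun f (ss1 @ t # ss2)) \<in> Q)"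

lemma ctxt_closed_rtrancl1:
  assumes "ctxt_closed Q" "(s,t) \<in> Q\<^sup>*"
  shows "(Fun f (ss1 @ s # ss2), Fun f (ss1 @ t # ss2)) \<in> Q\<^sup>*"
  using assms(2)
proof (induction rule: rtrancl_induct)
  case (step y z)
  then show ?case using assms(1) unfolding ctxt_closed_def
    by (meson rtrancl.rtrancl_into_rtrancl)
qed auto

lemma ctxt_closed_args:
  assumes "ctxt_closed Q" "list_all2 (\<lambda>s t. (s,t) \<in> Q\<^sup>*) ss ts"
  shows "(Fun f (pre @ ss), Fun f (pre @ ts)) \<in> Q\<^sup>*"
  using assms(2)
proof (induction arbitrary: pre rule: list_all2_induct)
  case (Cons s ss t ts)
  have "(Fun f (pre @ s # ss), Fun f (pre @ t # ss)) \<in> Q\<^sup>*"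
    using ctxt_closed_rtrancl1[OF assms(1) Cons(1)] .
  moreover have "(Fun f ((pre @ [t]) @ ss), Fun f ((pre @ [t]) @ ts)) \<in> Q\<^sup>*" using Cons(3) .
  ultimately show ?case using rtrancl_trans by fastforce
qed auto

lemma ctxt_closed_args':
  assumes "ctxt_closed Q" "length ss = length ts" "\<forall>i<length ss. (ss!i, ts!i) \<in> Q\<^sup>*"
  shows "(Fun f ss, Fun f ts) \<in> Q\<^sup>*"
  using ctxt_closed_args[OF assms(1), of ss ts f "[]"] assms(2,3) by (simp add: list_all2_conv_all_nth)

lemma ctxt_closed_rsi: "ctxt_closed (rsi S)"
  unfolding ctxt_closed_def by (auto intro: rsi.ctxt)

lemma ctxt_closed_rsi_sym: "ctxt_closed (rsi S \<union> (rsi S)\<inverse>)"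
  unfolding ctxt_closed_def by (auto intro: rsi.ctxt)

definition cv :: "('f,'v) trs \<Rightarrow> ('f,'v) term rel" where
  "cv C = (rsi C \<union> (rsi C)\<inverse>)\<^sup>*"

lemma conv_cv: "conv C = cv C"
  unfolding conv_def cv_def rstep_eq ..

lemma cv_args: "length ss = length ts \<Longrightarrow> \<forall>i<length ss. (ss!i, ts!i) \<in> cv C \<Longrightarrow> (Fun f ss, Fun f ts) \<in> cv C"
  unfolding cv_def by (rule ctxt_closed_args'[OF ctxt_closed_rsi_sym])

lemma cv_subst: "(s,t) \<in> cv C \<Longrightarrow> (subst s \<delta>, subst t \<delta>) \<in> cv C"
  unfolding cv_def
proof (induction rule: rtrancl_induct)
  case (step y z)
  then show ?case using rsi_subst
    by (metis (no_types, lifting) Un_iff converse_iff rtrancl.rtrancl_into_rtrancl)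
qed auto

lemma cv_sym: "(s,t) \<in> cv C \<Longrightarrow> (t,s) \<in> cv C"
  unfolding cv_def by (metis converse_Un converse_converse converse_iff rtrancl_converseI sup_commute)

lemma cv_trans: "(s,t) \<in> cv C \<Longrightarrow> (t,u) \<in> cv C \<Longrightarrow> (s,u) \<in> cv C"
  unfolding cv_def by auto

lemma cv_refl[simp]: "(s,s) \<in> cv C"
  unfolding cv_def by auto

lemma rsi_rtrancl_cv: "(s,t) \<in> (rsi C)\<^sup>* \<Longrightarrow> (s,t) \<in> cv C"
  unfolding cv_def by (meson in_rtrancl_UnI)

inductive_set par :: "('f,'v) trs \<Rightarrow> ('f,'v) term rel" for S where
  pvar: "(Var x, Var x) \<in> par S"
| pfun: "length ss = length ts \<Longrightarrow> \<forall>i<length ss. (ss!i, ts!i) \<in> par S \<Longrightarrow> (Fun f ss, Fun f ts) \<in> par S"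
| proot: "(l,r) \<in> S \<Longrightarrow> (subst l \<sigma>, subst r \<sigma>) \<in> par S"

lemma par_refl[simp]: "(t,t) \<in> par S"
  by (induction t) (auto intro!: par.intros)

lemma rsi_par: "(s,t) \<in> rsi S \<Longrightarrow> (s,t) \<in> par S"
proof (induction rule: rsi.induct)
  case (root l r \<sigma>)
  then show ?case by (rule par.proot)
next
  case (ctxt s t f ss1 ss2)
  show ?case
    by (rule par.pfun) (use ctxt in \<open>auto simp: nth_append nth_Cons split: nat.splits\<close>)
qed

lemma par_rsi: "(s,t) \<in> par S \<Longrightarrow> (s,t) \<in> (rsi S)\<^sup>*"
proof (induction rule: par.induct)
  case (pfun ss ts f)
  then show ?case by (intro ctxt_closed_args'[OF ctxt_closed_rsi]) auto
next
  case (proot l r \<sigma>)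
  then show ?case by (auto intro: rsi.root)
qed auto

lemma par_subst: "(\<And>x. x \<in> vars t \<Longrightarrow> (\<sigma> x, \<tau> x) \<in> par S) \<Longrightarrow> (subst t \<sigma>, subst t \<tau>) \<in> par S"
proof (induction t)
  case (Fun f ts)
  show ?case by (simp, rule par.pfun) (auto intro!: Fun.IH nth_mem Fun.prems)
qed (auto intro: par.intros)

lemma par_mono: assumes "S \<subseteq> S'" shows "(s,t) \<in> par S \<Longrightarrow> (s,t) \<in> par S'"
  by (induction rule: par.induct) (use assms in \<open>auto intro: par.intros\<close>)



lemma rsi_mono: assumes "S \<subseteq> S'" shows "(s,t) \<in> rsi S \<Longrightarrow> (s,t) \<in> rsi S'"
  by (induction rule: rsi.induct) (use assms in \<open>auto intro: rsi.intros\<close>)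

lemma CR_cv_join:
  assumes "CR C" "(a,b) \<in> cv C"
  shows "\<exists>n. (a,n) \<in> (rsi C)\<^sup>* \<and> (b,n) \<in> (rsi C)\<^sup>*"
proof -
  have cr: "((rsi C)\<inverse>)\<^sup>* O (rsi C)\<^sup>* \<subseteq> (rsi C)\<^sup>* O ((rsi C)\<inverse>)\<^sup>*"
    using assms(1) unfolding CR_def rstep_eq .
  have "(a,b) \<in> (rsi C \<union> (rsi C)\<inverse>)\<^sup>*" using assms(2) unfolding cv_def .
  then show ?thesis
  proof (induction rule: rtrancl_induct)
    case base
    then show ?case by auto
  next
    case (step y z)
    then obtain n where n: "(a,n) \<in> (rsi C)\<^sup>*" "(y,n) \<in> (rsi C)\<^sup>*" by auto
    show ?case
    proof (cases "(y,z) \<in> rsi C")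
      case True
      then have "(n,z) \<in> ((rsi C)\<inverse>)\<^sup>* O (rsi C)\<^sup>*" using n(2)
        by (meson relcompI rtrancl_converseI r_into_rtrancl)
      then obtain m where "(n,m) \<in> (rsi C)\<^sup>*" "(z,m) \<in> (rsi C)\<^sup>*"
        using cr by (auto simp: rtrancl_converse)
      then show ?thesis using n(1) by (meson rtrancl_trans)
    next
      case False
      then have "(z,y) \<in> rsi C" using step by auto
      then show ?thesis using n by (meson converse_rtrancl_into_rtrancl)
    qed
  qed
qed

lemma diamond_confluent:
  assumes dia: "\<And>s t u. (s,t) \<in> D \<Longrightarrow> (s,u) \<in> D \<Longrightarrow> \<exists>n. (t,n) \<in> D \<and> (u,n) \<in> D"
  shows "(s,t) \<in> D\<^sup>* \<Longrightarrow> (s,u) \<in> D\<^sup>* \<Longrightarrow> \<exists>n. (t,n) \<in> D\<^sup>* \<and> (u,n) \<in> D\<^sup>*"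
proof -
  have strip: "(s,t) \<in> D\<^sup>* \<Longrightarrow> (s,u) \<in> D \<Longrightarrow> \<exists>n. (t,n) \<in> D \<and> (u,n) \<in> D\<^sup>*" for s t u
  proof (induction arbitrary: u rule: rtrancl_induct)
    case base
    then show ?case by auto
  next
    case (step y z)
    then obtain n where "(y,n) \<in> D" "(u,n) \<in> D\<^sup>*" by blast
    then obtain m where "(z,m) \<in> D" "(n,m) \<in> D" using dia step(2) by blast
    then show ?case using \<open>(u,n) \<in> D\<^sup>*\<close> by (meson rtrancl.rtrancl_into_rtrancl)
  qed
  have main: "(s,u) \<in> D\<^sup>* \<Longrightarrow> (s,t) \<in> D\<^sup>* \<Longrightarrow> \<exists>n. (t,n) \<in> D\<^sup>* \<and> (u,n) \<in> D\<^sup>*" for u t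
  proof (induction arbitrary: t rule: rtrancl_induct)
    case base
    then show ?case by auto
  next
    case (step y z)
    then obtain n where "(t,n) \<in> D\<^sup>*" "(y,n) \<in> D\<^sup>*" by blast
    then obtain m where "(n,m) \<in> D" "(z,m) \<in> D\<^sup>*" using strip step(2) by blast
    then show ?case using \<open>(t,n) \<in> D\<^sup>*\<close> by (meson rtrancl.rtrancl_into_rtrancl)
  qed
  show "(s,t) \<in> D\<^sup>* \<Longrightarrow> (s,u) \<in> D\<^sup>* \<Longrightarrow> \<exists>n. (t,n) \<in> D\<^sup>* \<and> (u,n) \<in> D\<^sup>*"
    using main by blast
qed

lemma CR_from_G:
  assumes CRC: "CR C" and CsubR: "C \<subseteq> R"
    and G: "\<And>S1 S2 s t u. S1 \<subseteq> R \<Longrightarrow> S2 \<subseteq> R \<Longrightarrow> (s,t) \<in> par S1 \<Longrightarrow> (s,u) \<in> par S2 \<Longrightarrow>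
             \<exists>v w. (t,v) \<in> par S2 \<and> (v,w) \<in> cv C \<and> (u,w) \<in> par S1"
  shows "CR R"
proof -
  have claim1: "(x,y) \<in> (rsi C)\<^sup>* \<Longrightarrow> (x,z) \<in> par R \<Longrightarrow> \<exists>z'. (y,z') \<in> par R \<and> (z,z') \<in> cv C" for x y z
  proof (induction rule: rtrancl_induct)
    case base
    then show ?case by auto
  next
    case (step y y1)
    then obtain z' where z': "(y,z') \<in> par R" "(z,z') \<in> cv C" by blast
    have "(y,y1) \<in> par C" using step(2) by (rule rsi_par)
    from G[OF CsubR _ this z'(1)] obtain v w where vw: "(y1,v) \<in> par R" "(v,w) \<in> cv C" "(z',w) \<in> par C"
      by auto
    have "(z',w) \<in> cv C" using vw(3) par_rsi rsi_rtrancl_cv by blast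
    then have "(z,v) \<in> cv C" using z'(2) vw(2) by (meson cv_sym cv_trans)
    then show ?case using vw(1) by blast
  qed
  define D where "D = par R O (rsi C)\<^sup>*"
  have dia: "\<exists>n. (t,n) \<in> D \<and> (u,n) \<in> D" if st: "(s,t) \<in> D" and su: "(s,u) \<in> D" for s t u
  proof -
    obtain t0 where t0: "(s,t0) \<in> par R" "(t0,t) \<in> (rsi C)\<^sup>*" using st unfolding D_def by blast
    obtain u0 where u0: "(s,u0) \<in> par R" "(u0,u) \<in> (rsi C)\<^sup>*" using su unfolding D_def by blast
    obtain a b where ab: "(t0,a) \<in> par R" "(a,b) \<in> cv C" "(u0,b) \<in> par R"
      using G[OF order_refl order_refl t0(1) u0(1)] by auto
    obtain a' where a': "(t,a') \<in> par R" "(a,a') \<in> cv C" using claim1[OF t0(2) ab(1)] by auto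
    obtain b' where b': "(u,b') \<in> par R" "(b,b') \<in> cv C" using claim1[OF u0(2) ab(3)] by auto
    have "(a',b') \<in> cv C" using a'(2) ab(2) b'(2) by (meson cv_sym cv_trans)
    then obtain n where "(a',n) \<in> (rsi C)\<^sup>*" "(b',n) \<in> (rsi C)\<^sup>*" using CR_cv_join[OF CRC] by blast
    then show ?thesis using a'(1) b'(1) unfolding D_def by auto
  qed
  have rsiC: "(rsi C)\<^sup>* \<subseteq> (rsi R)\<^sup>*"
    by (rule rtrancl_mono) (use rsi_mono[OF CsubR] in auto)
  have "D \<subseteq> (rsi R)\<^sup>*" unfolding D_def using par_rsi rsiC by fastforce
  moreover have "rsi R \<subseteq> D" unfolding D_def using rsi_par by fastforce
  ultimately have DR: "D\<^sup>* = (rsi R)\<^sup>*"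
    by (metis rtrancl_idemp rtrancl_mono subset_antisym)
  have conf: "\<exists>n. (t,n) \<in> D\<^sup>* \<and> (u,n) \<in> D\<^sup>*" if "(s,t) \<in> D\<^sup>*" "(s,u) \<in> D\<^sup>*" for s t u
    by (rule diamond_confluent[of D, OF _ that]) (use dia in blast)
  show ?thesis unfolding CR_def rstep_eq
  proof
    fix x assume "x \<in> ((rsi R)\<inverse>)\<^sup>* O (rsi R)\<^sup>*"
    then obtain a b c where x: "x = (a,c)" "(b,a) \<in> (rsi R)\<^sup>*" "(b,c) \<in> (rsi R)\<^sup>*"
      by (auto simp: rtrancl_converse)
    then obtain n where "(a,n) \<in> D\<^sup>*" "(c,n) \<in> D\<^sup>*" using conf DR by metis
    then show "x \<in> (rsi R)\<^sup>* O ((rsi R)\<inverse>)\<^sup>*" using x DR by (auto simp: rtrancl_converse)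
  qed
qed



definition unif_l :: "('f,'v) subst \<Rightarrow> (('f,'v) term \<times> ('f,'v) term) list \<Rightarrow> bool" where
  "unif_l \<sigma> xs \<longleftrightarrow> (\<forall>(s,t)\<in>set xs. subst s \<sigma> = subst t \<sigma>)"

definition vsl :: "(('f,'v) term \<times> ('f,'v) term) list \<Rightarrow> 'v set" where
  "vsl xs = (\<Union>(s,t)\<in>set xs. vars s \<union> vars t)"

definition szl :: "(('f,'v) term \<times> ('f,'v) term) list \<Rightarrow> nat" where
  "szl xs = sum_list (map (\<lambda>(s,t). size s + size t + 1) xs)"

lemma finite_vsl[simp]: "finite (vsl xs)"
  unfolding vsl_def by auto

lemma size_subst_occ: "x \<in> vars u \<Longrightarrow> u \<noteq> Var x \<Longrightarrow> size (\<tau> x) < size (subst u \<tau>)"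
proof (induction u)
  case (Var y)
  then show ?case by auto
next
  case (Fun f us)
  then obtain ui where ui: "ui \<in> set us" "x \<in> vars ui" by auto
  have le: "size (subst ui \<tau>) \<le> size_list size (map (\<lambda>t. subst t \<tau>) us)"
    by (rule size_list_estimation'[of "subst ui \<tau>"]) (use ui in auto)
  have "size (\<tau> x) \<le> size (subst ui \<tau>)"
  proof (cases "ui = Var x")
    case True
    then show ?thesis by simp
  next
    case False
    then show ?thesis using Fun.IH[OF ui(1) ui(2) False] by simp
  qed
  then show ?case using le by simp
qed

lemma szl_zip: "length ss = length ts \<Longrightarrow> szl (zip ss ts) \<le> size_list size ss + size_list size ts"
  unfolding szl_def by (induction ss ts rule: list_induct2) auto

lemma map_eq_zip: "length ss = length ts \<Longrightarrow> (map g ss = map g ts) \<longleftrightarrow> (\<forall>(a,b)\<in>set (zip ss ts). g a = g b)"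
  by (induction ss ts rule: list_induct2) auto

lemma UN_zip: "length ss = length ts \<Longrightarrow> (\<Union>(a,b)\<in>set (zip ss ts). A a \<union> B b) = (\<Union>a\<in>set ss. A a) \<union> (\<Union>b\<in>set ts. B b)"
  by (induction ss ts rule: list_induct2) auto

lemma mgu_list:
  "unif_l \<tau> xs \<Longrightarrow> \<exists>\<sigma>. unif_l \<sigma> xs \<and> (\<forall>\<tau>. unif_l \<tau> xs \<longrightarrow> (\<exists>\<delta>. \<forall>x. \<tau> x = subst (\<sigma> x) \<delta>))"
proof (induction xs arbitrary: \<tau> rule: wf_induct[OF wf_measures[of "[\<lambda>xs. card (vsl xs), szl]"]])
  case (1 xs)
  note unif = 1(2)
  have IH: "\<exists>\<sigma>. unif_l \<sigma> y \<and> (\<forall>\<tau>. unif_l \<tau> y \<longrightarrow> (\<exists>\<delta>. \<forall>x. \<tau> x = subst (\<sigma> x) \<delta>))"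
    if "(y, xs) \<in> measures [\<lambda>xs. card (vsl xs), szl]" "unif_l \<tau> y" for y \<tau>
    using 1(1) that by blast
  show ?case
  proof (cases xs)
    case Nil
    have "\<exists>\<delta>. \<forall>x. \<tau>' x = subst (Var x) \<delta>" for \<tau>' :: "('a,'b) subst" by (rule exI[of _ \<tau>']) simp
    then show ?thesis unfolding Nil unif_l_def by (intro exI[of _ Var]) auto
  next
    case (Cons p rest)
    obtain s t where p: "p = (s,t)" by (cases p)
    have vrest: "vsl rest \<subseteq> vsl xs" unfolding vsl_def Cons by auto
    have crest: "card (vsl rest) \<le> card (vsl xs)" using vrest by (simp add: card_mono)
    show ?thesis
    proof (cases "s = t")
      case True
      have "szl rest < szl xs" unfolding Cons p szl_def by simp
      then have "(rest, xs) \<in> measures [\<lambda>xs. card (vsl xs), szl]" using crest by auto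
      have "unif_l \<tau> rest" using unif unfolding Cons unif_l_def by auto
      from IH[OF \<open>(rest, xs) \<in> _\<close> this] obtain \<sigma> where
        \<sigma>: "unif_l \<sigma> rest" "\<forall>\<tau>. unif_l \<tau> rest \<longrightarrow> (\<exists>\<delta>. \<forall>x. \<tau> x = subst (\<sigma> x) \<delta>)"
        by auto
      show ?thesis
        by (rule exI[of _ \<sigma>]) (use \<sigma> True in \<open>auto simp: unif_l_def Cons p\<close>)
    next
      case st: False
      show ?thesis
      proof (cases "\<exists>x u. ((s = Var x \<and> t = u) \<or> (s = u \<and> t = Var x)) \<and> u \<noteq> Var x")
        case True
        then obtain x u where xu: "(s = Var x \<and> t = u) \<or> (s = u \<and> t = Var x)" "u \<noteq> Var x" by blast
        have unif_eq: "unif_l \<tau>' xs \<longleftrightarrow> \<tau>' x = subst u \<tau>' \<and> unif_l \<tau>' rest" for \<tau>'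
          using xu(1) unfolding unif_l_def Cons p by auto
        have xnot: "x \<notin> vars u"
          using unif unif_eq size_subst_occ[OF _ xu(2), of \<tau>] by auto
        define \<theta> where "\<theta> = Var(x := u)"
        define rest' where "rest' = map (\<lambda>(a,b). (subst a \<theta>, subst b \<theta>)) rest"
        have u_th: "subst u \<theta> = u" unfolding \<theta>_def by (rule trans[OF subst_cong subst_Var]) (use xnot in auto)
        have unif'_eq: "unif_l \<tau>' rest'" if "unif_l \<tau>' xs" for \<tau>'
        proof -
          have eq: "(\<lambda>y. subst (\<theta> y) \<tau>') = \<tau>'" using that unif_eq unfolding \<theta>_def by auto
          show ?thesis using that unif_eq unfolding unif_l_def rest'_def by (auto simp: subst_subst eq)
        qed
        have vsub: "vsl rest' \<subseteq> vsl xs - {x}"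
        proof -
          have "vars (subst a \<theta>) \<subseteq> (vars a - {x}) \<union> vars u" for a
            unfolding vars_subst \<theta>_def by (auto split: if_splits)
          moreover have "vars u \<subseteq> vsl xs" using xu(1) unfolding vsl_def Cons p by auto
          moreover have "x \<notin> vars u" by (rule xnot)
          ultimately show ?thesis unfolding rest'_def vsl_def Cons p by fastforce
        qed
        have "x \<in> vsl xs" using xu(1) unfolding vsl_def Cons p by auto
        then have "card (vsl rest') < card (vsl xs)" using vsub
          by (intro psubset_card_mono) auto
        then have "(rest', xs) \<in> measures [\<lambda>xs. card (vsl xs), szl]" by auto
        from IH[OF this unif'_eq[OF unif]] obtain \<sigma>' where
          \<sigma>': "unif_l \<sigma>' rest'" "\<forall>\<tau>. unif_l \<tau> rest' \<longrightarrow> (\<exists>\<delta>. \<forall>x. \<tau> x = subst (\<sigma>' x) \<delta>)"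
          by blast
        define \<sigma> where "\<sigma> = (\<lambda>y. subst (\<theta> y) \<sigma>')"
        have "unif_l \<sigma> xs"
        proof -
          have "subst u \<sigma> = subst (subst u \<theta>) \<sigma>'" unfolding \<sigma>_def by (simp add: subst_subst)
          then have "\<sigma> x = subst u \<sigma>" using u_th unfolding \<sigma>_def by (simp add: \<theta>_def)
          moreover have "unif_l \<sigma> rest" using \<sigma>'(1) unfolding unif_l_def rest'_def \<sigma>_def
            by (auto simp: subst_subst)
          ultimately show ?thesis using unif_eq by blast
        qed
        moreover have "\<exists>\<delta>. \<forall>y. \<tau>' y = subst (\<sigma> y) \<delta>" if ut: "unif_l \<tau>' xs" for \<tau>'
        proof -
          obtain \<delta> where \<delta>: "\<forall>y. \<tau>' y = subst (\<sigma>' y) \<delta>" using \<sigma>'(2) unif'_eq[OF ut] by blast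
          have eq: "(\<lambda>y. subst (\<theta> y) \<tau>') = \<tau>'" using ut unif_eq unfolding \<theta>_def by auto
          have "\<tau>' y = subst (\<sigma> y) \<delta>" for y
          proof -
            have "\<tau>' y = subst (\<theta> y) \<tau>'" using fun_cong[OF eq, of y] by simp
            also have "\<dots> = subst (\<theta> y) (\<lambda>z. subst (\<sigma>' z) \<delta>)" using \<delta> by metis
            also have "\<dots> = subst (\<sigma> y) \<delta>" unfolding \<sigma>_def by (simp add: subst_subst)
            finally show ?thesis .
          qed
          then show ?thesis by blast
        qed
        ultimately show ?thesis by blast
      next
        case False
        then obtain f ss g ts where ft: "s = Fun f ss" "t = Fun g ts" using st
          by (cases s; cases t) auto
        have "subst s \<tau> = subst t \<tau>" using unif unfolding unif_l_def Cons p by auto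
        then have fg: "f = g" and len: "length ss = length ts" using ft by (auto dest: map_eq_imp_length_eq)
        define rest' where "rest' = zip ss ts @ rest"
        have ueq: "unif_l \<tau>' xs \<longleftrightarrow> unif_l \<tau>' rest'" for \<tau>'
          unfolding unif_l_def Cons p rest'_def ft fg using map_eq_zip[OF len, of "\<lambda>t. subst t \<tau>'"]
          by auto
        have "vsl rest' = vsl xs"
          unfolding vsl_def rest'_def Cons p ft using UN_zip[OF len, of vars vars]
          by auto
        moreover have "szl rest' < szl xs"
          using szl_zip[OF len] unfolding rest'_def Cons p ft by (simp add: szl_def)
        ultimately have "(rest', xs) \<in> measures [\<lambda>xs. card (vsl xs), szl]" by auto
        have "unif_l \<tau> rest'" using ueq unif by blast
        from IH[OF \<open>(rest', xs) \<in> _\<close> this] show ?thesis unfolding ueq .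
      qed
    qed
  qed
qed

lemma mgu_exists:
  assumes "finite E" "unifier \<tau> E"
  shows "\<exists>\<sigma>. is_mgu \<sigma> E"
proof -
  obtain xs where xs: "set xs = E" using finite_list[OF assms(1)] by blast
  have u: "unifier \<sigma> E \<longleftrightarrow> unif_l \<sigma> xs" for \<sigma> unfolding unifier_def unif_l_def xs ..
  show ?thesis using mgu_list[of \<tau> xs] assms(2) unfolding is_mgu_def u by blast
qed



lemma fresh_bij:
  assumes inf: "infinite (UNIV :: 'v set)" and A: "finite (A :: 'v set)" and V: "finite (V :: 'v set)"
  shows "\<exists>\<rho>. bij \<rho> \<and> \<rho> ` A \<inter> V = {}"
proof -
  obtain B where B: "finite B" "card B = card A" "(A \<union> V) \<inter> B = {}"
    using finite_arbitrarily_large_disj[OF inf, of "A \<union> V" "card A"] A V by auto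
  obtain f where f: "bij_betw f A B" using finite_same_card_bij[OF A B(1) B(2)[symmetric]] by blast
  define \<rho> where "\<rho> x = (if x \<in> A then f x else if x \<in> B then inv_into A f x else x)" for x
  have fB: "x \<in> A \<Longrightarrow> f x \<in> B" for x using f by (auto simp: bij_betw_def)
  have iA: "y \<in> B \<Longrightarrow> inv_into A f y \<in> A" for y using f by (metis bij_betw_def inv_into_into)
  have AB: "x \<in> A \<Longrightarrow> x \<notin> B" for x using B(3) by auto
  have "\<rho> (\<rho> x) = x" for x
  proof (cases "x \<in> A")
    case True
    then show ?thesis using fB[OF True] AB[of "f x"] AB f unfolding \<rho>_def
      by (auto simp: bij_betw_def)
  next
    case False
    show ?thesis
    proof (cases "x \<in> B")
      case True
      then show ?thesis using False iA[OF True] f unfolding \<rho>_def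
        by (auto simp: bij_betw_def f_inv_into_f)
    next
      case False
      then show ?thesis using \<open>x \<notin> A\<close> unfolding \<rho>_def by auto
    qed
  qed
  then have "\<rho> \<circ> \<rho> = id" by auto
  then have "bij \<rho>" using o_bij by blast
  moreover have "\<rho> ` A \<inter> V = {}" using fB B(3) unfolding \<rho>_def by auto
  ultimately show ?thesis by blast
qed

lemma rename_multi:
  assumes inf: "infinite (UNIV :: 'v set)" and P: "finite P"
    and A: "\<forall>p\<in>P. finite (A p :: 'v set)" and V: "finite (V :: 'v set)"
  shows "\<exists>\<rho>. (\<forall>p\<in>P. bij (\<rho> p) \<and> \<rho> p ` A p \<inter> V = {}) \<and> (\<forall>p\<in>P. \<forall>q\<in>P. p \<noteq> q \<longrightarrow> \<rho> p ` A p \<inter> \<rho> q ` A q = {})"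
  using P A
proof (induction rule: finite_induct)
  case empty
  then show ?case by auto
next
  case (insert p P)
  then obtain \<rho> where \<rho>: "\<forall>p\<in>P. bij (\<rho> p) \<and> \<rho> p ` A p \<inter> V = {}"
    "\<forall>p\<in>P. \<forall>q\<in>P. p \<noteq> q \<longrightarrow> \<rho> p ` A p \<inter> \<rho> q ` A q = {}" by auto
  have fin: "finite (V \<union> (\<Union>q\<in>P. \<rho> q ` A q))" using insert V by auto
  have finA: "finite (A p)" using insert.prems by auto
  then obtain \<rho>0 where \<rho>0: "bij \<rho>0" "\<rho>0 ` A p \<inter> (V \<union> (\<Union>q\<in>P. \<rho> q ` A q)) = {}"
    using fresh_bij[OF inf finA fin] by blast
  define \<rho>' where "\<rho>' = \<rho>(p := \<rho>0)"
  have "\<forall>p'\<in>insert p P. bij (\<rho>' p') \<and> \<rho>' p' ` A p' \<inter> V = {}"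
    using \<rho> \<rho>0 unfolding \<rho>'_def by auto
  moreover have "\<forall>p'\<in>insert p P. \<forall>q\<in>insert p P. p' \<noteq> q \<longrightarrow> \<rho>' p' ` A p' \<inter> \<rho>' q ` A q = {}"
  proof (intro ballI impI)
    fix p' q assume pq: "p' \<in> insert p P" "q \<in> insert p P" "p' \<noteq> q"
    have d: "\<rho>0 ` A p \<inter> \<rho> q' ` A q' = {}" if "q' \<in> P" for q'
      using \<rho>0(2) that by blast
    show "\<rho>' p' ` A p' \<inter> \<rho>' q ` A q = {}"
      using pq \<rho>(2) d insert.hyps(2) unfolding \<rho>'_def by (cases "p' = p"; cases "q = p") (auto simp: Int_commute)
  qed
  ultimately show ?case by blast
qed

lemma vars_rename: "vars (subst t (Var \<circ> \<rho>)) = \<rho> ` vars t"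
  by (induction t) auto

declare par_repl.simps[simp del]

lemma par_repl_root: "[] \<in> P \<Longrightarrow> par_repl t P g = g []"
  by (subst par_repl.simps) simp

lemma map_zip_upt: "map (\<lambda>(i, s). h i s) (zip [0..<length ts] ts) = map (\<lambda>i. h i (ts ! i)) [0..<length ts]"
  by (rule nth_equalityI) auto

lemma par_repl_Fun: "[] \<notin> P \<Longrightarrow> par_repl (Fun f ts) P g =
   Fun f (map (\<lambda>i. par_repl (ts!i) {q. i # q \<in> P} (\<lambda>q. g (i # q))) [0..<length ts])"
  by (subst par_repl.simps) (simp add: map_zip_upt)

lemma par_repl_Var: "[] \<notin> P \<Longrightarrow> par_repl (Var x) P g = Var x"
  by (subst par_repl.simps) simp

lemma par_repl_empty[simp]: "par_repl t {} g = t"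
proof (induction t arbitrary: g)
  case (Var x)
  then show ?case by (simp add: par_repl_Var)
next
  case (Fun f ts)
  then show ?case by (simp add: par_repl_Fun) (rule nth_equalityI, auto)
qed

lemma par_repl_cong: "(\<And>p. p \<in> P \<Longrightarrow> g p = g' p) \<Longrightarrow> par_repl t P g = par_repl t P g'"
proof (induction t arbitrary: P g g')
  case (Var x)
  then show ?case by (cases "[] \<in> P") (auto simp: par_repl_Var par_repl_root)
next
  case (Fun f ts)
  show ?case
  proof (cases "[] \<in> P")
    case True
    then show ?thesis using Fun by (simp add: par_repl_root)
  next
    case False
    have "par_repl (ts!i) {q. i#q\<in>P} (\<lambda>q. g (i#q)) = par_repl (ts!i) {q. i#q\<in>P} (\<lambda>q. g' (i#q))"
      if "i < length ts" for i by (rule Fun.IH) (use that Fun.prems in auto)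
    then show ?thesis using False by (simp add: par_repl_Fun)
  qed
qed

lemma par_repl_subst: "P \<subseteq> poss t \<Longrightarrow> subst (par_repl t P g) \<delta> = par_repl (subst t \<delta>) P (\<lambda>p. subst (g p) \<delta>)"
proof (induction t arbitrary: P g)
  case (Var x)
  show ?case
  proof (cases "[] \<in> P")
    case True
    then show ?thesis by (simp add: par_repl_root)
  next
    case False
    then have "P = {}" using Var by (auto simp: poss_def elim: valid_pos.elims)
    then show ?thesis by simp
  qed
next
  case (Fun f ts)
  show ?case
  proof (cases "[] \<in> P")
    case True
    then show ?thesis by (simp add: par_repl_root)
  next
    case False
    have sub: "{q. i # q \<in> P} \<subseteq> poss (ts ! i)" for i using Fun.prems by (auto simp: poss_def)
    show ?thesis using False by (simp add: par_repl_Fun Fun.IH[OF _ sub])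
  qed
qed



declare par_repl.simps[simp del]

lemma fun_poss_Fun: "i # q \<in> fun_poss (Fun f ls) \<longleftrightarrow> i < length ls \<and> q \<in> fun_poss (ls ! i)"
  by (auto simp: fun_poss_def poss_def)

lemma root_fun_poss: "[] \<in> fun_poss (Fun f ls)"
  by (auto simp: fun_poss_def poss_def)

lemma parallel_Cons: "parallel (i # p) (j # q) \<longleftrightarrow> i \<noteq> j \<or> parallel p q"
  unfolding parallel_def by auto

lemma decomp:
  assumes "linear_term l" "(subst l \<sigma>, u) \<in> par S"
  shows "\<exists>P rls \<theta> \<sigma>'. P \<subseteq> fun_poss l \<and> (\<forall>p\<in>P. \<forall>q\<in>P. p \<noteq> q \<longrightarrow> parallel p q) \<and>
    (\<forall>p\<in>P. rls p \<in> S \<and> subst (fst (rls p)) (\<theta> p) = subst (subt_at l p) \<sigma>') \<and>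
    (\<forall>x\<in>vars l. (\<sigma> x, \<sigma>' x) \<in> par S) \<and>
    u = par_repl (subst l \<sigma>') P (\<lambda>p. subst (snd (rls p)) (\<theta> p))"
  using assms
proof (induction l arbitrary: u)
  case (Var x)
  show ?case
    by (rule exI[of _ "{}"], rule exI, rule exI, rule exI[of _ "\<sigma>(x := u)"]) (use Var in auto)
next
  case (Fun f ls)
  have lin: "\<forall>t\<in>set ls. linear_term t" "\<forall>i j. i < j \<and> j < length ls \<longrightarrow> vars (ls ! i) \<inter> vars (ls ! j) = {}"
    using Fun.prems(1) by auto
  have uniq: "i = j" if "i < length ls" "j < length ls" "x \<in> vars (ls!i)" "x \<in> vars (ls!j)" for i j x
    using lin(2) that by (metis disjoint_iff linorder_neqE_nat)
  from Fun.prems(2) show ?case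
  proof (cases rule: par.cases)
    case (pfun ss us)
    define n where "n = length ls"
    have ss: "ss = map (\<lambda>t. subst t \<sigma>) ls" using pfun by simp
    have len: "length us = n" using pfun ss n_def by simp
    define Q where "Q = (\<lambda>i P rls \<theta> \<sigma>'. P \<subseteq> fun_poss (ls!i) \<and> (\<forall>p\<in>P. \<forall>q\<in>P. p \<noteq> q \<longrightarrow> parallel p q) \<and>
      (\<forall>p\<in>P. rls p \<in> S \<and> subst (fst (rls p)) (\<theta> p) = subst (subt_at (ls!i) p) \<sigma>') \<and>
      (\<forall>x\<in>vars (ls!i). (\<sigma> x, \<sigma>' x) \<in> par S) \<and>
      us!i = par_repl (subst (ls!i) \<sigma>') P (\<lambda>p. subst (snd (rls p)) (\<theta> p)))"
    have "\<forall>i\<in>{..<n}. \<exists>P rls \<theta> \<sigma>'. Q i P rls \<theta> \<sigma>'"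
    proof
      fix i assume "i \<in> {..<n}"
      then have i: "i < length ls" unfolding n_def by auto
      have a: "ls!i \<in> set ls" using i by simp
      have b: "linear_term (ls!i)" using lin(1) a by blast
      have "(ss!i, us!i) \<in> par S" using pfun(4) i ss by simp
      then have c: "(subst (ls!i) \<sigma>, us!i) \<in> par S" using ss i by simp
      show "\<exists>P rls \<theta> \<sigma>'. Q i P rls \<theta> \<sigma>'" unfolding Q_def by (rule Fun.IH[OF a b c])
    qed
    then have "\<exists>Pf. \<forall>i\<in>{..<n}. \<exists>rls \<theta> \<sigma>'. Q i (Pf i) rls \<theta> \<sigma>'" by (rule bchoice)
    then obtain Pf where "\<forall>i\<in>{..<n}. \<exists>rls \<theta> \<sigma>'. Q i (Pf i) rls \<theta> \<sigma>'" by blast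
    then have "\<exists>rf. \<forall>i\<in>{..<n}. \<exists>\<theta> \<sigma>'. Q i (Pf i) (rf i) \<theta> \<sigma>'" by (rule bchoice)
    then obtain rf where "\<forall>i\<in>{..<n}. \<exists>\<theta> \<sigma>'. Q i (Pf i) (rf i) \<theta> \<sigma>'" by blast
    then have "\<exists>\<theta>f. \<forall>i\<in>{..<n}. \<exists>\<sigma>'. Q i (Pf i) (rf i) (\<theta>f i) \<sigma>'" by (rule bchoice)
    then obtain \<theta>f where "\<forall>i\<in>{..<n}. \<exists>\<sigma>'. Q i (Pf i) (rf i) (\<theta>f i) \<sigma>'" by blast
    then have "\<exists>\<sigma>f. \<forall>i\<in>{..<n}. Q i (Pf i) (rf i) (\<theta>f i) (\<sigma>f i)" by (rule bchoice)
    then obtain \<sigma>f where IHs0: "\<forall>i\<in>{..<n}. Q i (Pf i) (rf i) (\<theta>f i) (\<sigma>f i)" by blast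
    have IHs: "\<forall>i\<in>{..<n}. Pf i \<subseteq> fun_poss (ls!i) \<and> (\<forall>p\<in>Pf i. \<forall>q\<in>Pf i. p \<noteq> q \<longrightarrow> parallel p q) \<and>
      (\<forall>p\<in>Pf i. rf i p \<in> S \<and> subst (fst (rf i p)) (\<theta>f i p) = subst (subt_at (ls!i) p) (\<sigma>f i)) \<and>
      (\<forall>x\<in>vars (ls!i). (\<sigma> x, \<sigma>f i x) \<in> par S) \<and>
      us!i = par_repl (subst (ls!i) (\<sigma>f i)) (Pf i) (\<lambda>p. subst (snd (rf i p)) (\<theta>f i p))"
      using IHs0 unfolding Q_def by blast
    define P where "P = {i # q | i q. i < n \<and> q \<in> Pf i}"
    define rls where "rls p = rf (hd p) (tl p)" for p
    define \<theta> where "\<theta> p = \<theta>f (hd p) (tl p)" for p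
    define \<sigma>' where "\<sigma>' x = (if \<exists>i<n. x \<in> vars (ls!i) then \<sigma>f (SOME i. i < n \<and> x \<in> vars (ls!i)) x else \<sigma> x)" for x
    have \<sigma>'i: "\<sigma>' x = \<sigma>f i x" if "i < n" "x \<in> vars (ls!i)" for i x
    proof -
      have "(SOME i. i < n \<and> x \<in> vars (ls!i)) = i"
        by (rule some_equality) (use that uniq n_def in auto)
      then show ?thesis unfolding \<sigma>'_def using that by auto
    qed
    have substi: "subst t \<sigma>' = subst t (\<sigma>f i)" if "i < n" "vars t \<subseteq> vars (ls!i)" for i t
      by (rule subst_cong) (use that \<sigma>'i in auto)
    have noroot: "[] \<notin> P" unfolding P_def by auto
    have Pi: "{q. i # q \<in> P} = Pf i" if "i < n" for i unfolding P_def using that by auto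
    have "P \<subseteq> fun_poss (Fun f ls)"
      unfolding P_def using IHs by (auto simp: fun_poss_Fun n_def) (meson lessThan_iff subsetD)
    moreover have "\<forall>p\<in>P. \<forall>q\<in>P. p \<noteq> q \<longrightarrow> parallel p q"
      unfolding P_def using IHs by (auto simp: parallel_Cons) (meson lessThan_iff)
    moreover have "\<forall>p\<in>P. rls p \<in> S \<and> subst (fst (rls p)) (\<theta> p) = subst (subt_at (Fun f ls) p) \<sigma>'"
    proof
      fix p assume "p \<in> P"
      then obtain i q where p: "p = i # q" "i < n" "q \<in> Pf i" unfolding P_def by auto
      have fp: "q \<in> fun_poss (ls!i)" using IHs p by auto
      then have "vars (subt_at (ls!i) q) \<subseteq> vars (ls!i)"
        by (intro vars_subt_at) (auto simp: fun_poss_def poss_def)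
      then show "rls p \<in> S \<and> subst (fst (rls p)) (\<theta> p) = subst (subt_at (Fun f ls) p) \<sigma>'"
        using IHs p substi[OF p(2)] unfolding rls_def \<theta>_def by auto
    qed
    moreover have "\<forall>x\<in>vars (Fun f ls). (\<sigma> x, \<sigma>' x) \<in> par S"
    proof
      fix x assume "x \<in> vars (Fun f ls)"
      then obtain i where "i < n" "x \<in> vars (ls!i)" unfolding n_def by (auto simp: in_set_conv_nth)
      then show "(\<sigma> x, \<sigma>' x) \<in> par S" using IHs \<sigma>'i by auto
    qed
    moreover have "u = par_repl (subst (Fun f ls) \<sigma>') P (\<lambda>p. subst (snd (rls p)) (\<theta> p))"
    proof -
      have "par_repl (subst (Fun f ls) \<sigma>') P (\<lambda>p. subst (snd (rls p)) (\<theta> p)) =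
        Fun f (map (\<lambda>i. par_repl (subst (ls!i) \<sigma>') (Pf i) (\<lambda>q. subst (snd (rf i q)) (\<theta>f i q))) [0..<n])"
        by (simp add: par_repl_Fun noroot Pi n_def rls_def \<theta>_def cong: map_cong)
      also have "\<dots> = Fun f (map (\<lambda>i. us ! i) [0..<n])"
        using IHs substi[OF _ order_refl] by (auto cong: map_cong)
      also have "\<dots> = Fun f us" using len map_nth[of us] by simp
      finally show ?thesis using pfun by simp
    qed
    ultimately show ?thesis by blast
  next
    case (proot l2 r2 \<theta>0)
    show ?thesis
      by (rule exI[of _ "{[]}"], rule exI[of _ "\<lambda>_. (l2, r2)"], rule exI[of _ "\<lambda>_. \<theta>0"], rule exI[of _ \<sigma>])
         (use proot in \<open>auto simp: root_fun_poss par_repl_root\<close>)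
  qed auto
qed



declare par_repl.simps[simp del]

lemma rule_vars_rename: "rule_vars (subst l (Var \<circ> \<rho>), subst r (Var \<circ> \<rho>)) = \<rho> ` rule_vars (l, r)"
  unfolding rule_vars_def by (simp add: vars_rename image_Un)

lemma overlap:
  fixes l r :: "('f, 'v) term"
  assumes inf: "infinite (UNIV :: 'v set)" and wf: "wf_trs R" and ll: "left_linear R"
    and pcpC: "\<forall>(t, u) \<in> pcp R R. (t, u) \<in> cv C"
    and Sa: "Sa \<subseteq> R" and Sb: "Sb \<subseteq> R" and lr: "(l, r) \<in> Sa"
    and s: "(subst l \<sigma>, u) \<in> par Sb"
  shows "\<exists>v w. (subst r \<sigma>, v) \<in> par Sb \<and> (v, w) \<in> cv C \<and> (u, w) \<in> par Sa"
proof -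
  have lrR: "(l, r) \<in> R" using lr Sa by auto
  have lin: "linear_term l" using ll lrR unfolding left_linear_def by auto
  have vr: "vars r \<subseteq> vars l" using wf lrR unfolding wf_trs_def by auto
  obtain P rls \<theta> \<sigma>' where D: "P \<subseteq> fun_poss l" "\<forall>p\<in>P. \<forall>q\<in>P. p \<noteq> q \<longrightarrow> parallel p q"
    "\<forall>p\<in>P. rls p \<in> Sb \<and> subst (fst (rls p)) (\<theta> p) = subst (subt_at l p) \<sigma>'"
    "\<forall>x\<in>vars l. (\<sigma> x, \<sigma>' x) \<in> par Sb"
    "u = par_repl (subst l \<sigma>') P (\<lambda>p. subst (snd (rls p)) (\<theta> p))"
    using decomp[OF lin s] by blast
  have tstep: "(subst r \<sigma>, subst r \<sigma>') \<in> par Sb"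
    by (rule par_subst) (use D(4) vr in auto)
  show ?thesis
  proof (cases "P = {}")
    case True
    then have "u = subst l \<sigma>'" using D(5) by simp
    then have "(u, subst r \<sigma>') \<in> par Sa" using par.proot[OF lr] by simp
    then show ?thesis using tstep cv_refl by blast
  next
    case Pne: False
    have Pposs: "P \<subseteq> poss l" using D(1) unfolding fun_poss_def by auto
    have finP: "finite P" using finite_subset[OF Pposs finite_poss] .
    have finA: "\<forall>p\<in>P. finite (rule_vars (rls p))" by (auto simp: rule_vars_def)
    have finV: "finite (rule_vars (l, r))" by (auto simp: rule_vars_def)
    obtain \<rho> where \<rho>: "\<forall>p\<in>P. bij (\<rho> p) \<and> \<rho> p ` rule_vars (rls p) \<inter> rule_vars (l, r) = {}"
      "\<forall>p\<in>P. \<forall>q\<in>P. p \<noteq> q \<longrightarrow> \<rho> p ` rule_vars (rls p) \<inter> \<rho> q ` rule_vars (rls q) = {}"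
      using rename_multi[OF inf finP finA finV] by blast
    define rls' where "rls' p = (subst (fst (rls p)) (Var \<circ> \<rho> p), subst (snd (rls p)) (Var \<circ> \<rho> p))" for p
    have rv: "rule_vars (rls' p) = \<rho> p ` rule_vars (rls p)" for p
      unfolding rls'_def using rule_vars_rename[of "fst (rls p)" "\<rho> p" "snd (rls p)"] by simp
    define Vp where "Vp p = \<rho> p ` rule_vars (rls p)" for p
    define \<tau> where "\<tau> y = (if \<exists>p\<in>P. y \<in> Vp p then (let p = SOME p. p \<in> P \<and> y \<in> Vp p in \<theta> p (inv (\<rho> p) y)) else \<sigma>' y)" for y
    have \<tau>p: "\<tau> (\<rho> p x) = \<theta> p x" if "p \<in> P" "x \<in> rule_vars (rls p)" for p x
    proof -
      have inV: "\<rho> p x \<in> Vp p" using that unfolding Vp_def by auto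
      have "(SOME q. q \<in> P \<and> \<rho> p x \<in> Vp q) = p"
        by (rule some_equality) (use inV that \<rho>(2) in \<open>auto simp: Vp_def\<close>)
      moreover have "inv (\<rho> p) (\<rho> p x) = x" using \<rho>(1) that(1) by (simp add: bij_is_inj)
      ultimately show ?thesis unfolding \<tau>_def using inV that by auto
    qed
    have \<tau>lr: "\<tau> y = \<sigma>' y" if "y \<in> rule_vars (l, r)" for y
    proof -
      have "\<not> (\<exists>p\<in>P. y \<in> Vp p)" using that \<rho>(1) unfolding Vp_def by blast
      then show ?thesis unfolding \<tau>_def by auto
    qed
    have eqf: "subst (fst (rls' p)) \<tau> = subst (fst (rls p)) (\<theta> p)" if "p \<in> P" for p
      unfolding rls'_def by (simp add: subst_subst, rule subst_cong) (use \<tau>p[OF that] in \<open>auto simp: rule_vars_def\<close>)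
    have eqs: "subst (snd (rls' p)) \<tau> = subst (snd (rls p)) (\<theta> p)" if "p \<in> P" for p
      unfolding rls'_def by (simp add: subst_subst, rule subst_cong) (use \<tau>p[OF that] in \<open>auto simp: rule_vars_def\<close>)
    have eql: "subst l \<tau> = subst l \<sigma>'" by (rule subst_cong) (use \<tau>lr in \<open>auto simp: rule_vars_def\<close>)
    have eqr: "subst r \<tau> = subst r \<sigma>'" by (rule subst_cong) (use \<tau>lr in \<open>auto simp: rule_vars_def\<close>)
    have eqsub: "subst (subt_at l p) \<tau> = subst (subt_at l p) \<sigma>'" if "p \<in> P" for p
    proof (rule subst_cong)
      fix x assume "x \<in> vars (subt_at l p)"
      then have "x \<in> vars l" using vars_subt_at[of l p] Pposs that by (auto simp: poss_def)
      then show "\<tau> x = \<sigma>' x" using \<tau>lr by (auto simp: rule_vars_def)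
    qed
    define E where "E = {(fst (rls' p), subt_at l p) | p. p \<in> P}"
    have finE: "finite E" unfolding E_def using finP by simp
    have unifE: "unifier \<tau> E" unfolding E_def unifier_def using eqf eqsub D(3) by auto
    obtain \<mu> where mgu: "is_mgu \<mu> E" using mgu_exists[OF finE unifE] by blast
    then obtain \<delta> where \<delta>: "\<forall>x. \<tau> x = subst (\<mu> x) \<delta>" using unifE unfolding is_mgu_def by blast
    have \<tau>eq: "(\<lambda>x. subst (\<mu> x) \<delta>) = \<tau>" using \<delta> by auto
    have "(u, subst r \<sigma>') \<in> cv C"
    proof (cases "P = {[]} \<and> is_variant (rls' []) (l, r)")
      case True
      then obtain \<pi> where \<pi>: "fst (rls' []) = subst l (Var \<circ> \<pi>)" "snd (rls' []) = subst r (Var \<circ> \<pi>)"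
        unfolding is_variant_def by auto
      have "subst (fst (rls' [])) \<tau> = subst l \<tau>" using unifE True unfolding unifier_def E_def by auto
      then have "subst l (\<lambda>x. \<tau> (\<pi> x)) = subst l \<tau>" using \<pi>(1) by (simp add: subst_subst)
      then have agree: "\<tau> (\<pi> x) = \<tau> x" if "x \<in> vars l" for x using subst_eq_vars that by fastforce
      have "u = subst (snd (rls [])) (\<theta> [])" using D(5) True by (simp add: par_repl_root)
      also have "\<dots> = subst (snd (rls' [])) \<tau>" using eqs True by simp
      also have "\<dots> = subst r (\<lambda>x. \<tau> (\<pi> x))" using \<pi>(2) by (simp add: subst_subst)
      also have "\<dots> = subst r \<tau>" by (rule subst_cong) (use agree vr in auto)
      also have "\<dots> = subst r \<sigma>'" by (rule eqr)
      finally show ?thesis by simp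
    next
      case notvar: False
      have inpcp: "(par_repl (subst l \<mu>) P (\<lambda>p. subst (snd (rls' p)) \<mu>), subst r \<mu>) \<in> pcp R R"
        unfolding pcp_def
      proof (intro CollectI, simp only: prod.case, intro exI conjI)
        show "variant_of (l, r) R" unfolding variant_of_def is_variant_def
          by (rule bexI[OF _ lrR], rule exI[of _ id]) auto
        show "P \<noteq> {}" by (rule Pne)
        show "P \<subseteq> fun_poss l" by (rule D(1))
        show "\<forall>p\<in>P. \<forall>q\<in>P. p \<noteq> q \<longrightarrow> parallel p q" by (rule D(2))
        show "\<forall>p\<in>P. variant_of (rls' p) R"
        proof
          fix p assume p: "p \<in> P"
          then have "rls p \<in> R" using D(3) Sb by auto
          then show "variant_of (rls' p) R" unfolding variant_of_def is_variant_def rls'_def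
            using \<rho>(1) p by auto
        qed
        show "\<forall>p\<in>P. rule_vars (rls' p) \<inter> rule_vars (l, r) = {}" using \<rho>(1) rv by auto
        show "\<forall>p\<in>P. \<forall>q\<in>P. p \<noteq> q \<longrightarrow> rule_vars (rls' p) \<inter> rule_vars (rls' q) = {}" using \<rho>(2) rv by auto
        show "is_mgu \<mu> {(fst (rls' p), subt_at l p) |p. p \<in> P}" using mgu unfolding E_def .
        show "P = {[]} \<longrightarrow> \<not> is_variant (rls' []) (l, r)" using notvar by auto
      qed (rule refl)+
      then have "(par_repl (subst l \<mu>) P (\<lambda>p. subst (snd (rls' p)) \<mu>), subst r \<mu>) \<in> cv C"
        using pcpC by auto
      from cv_subst[OF this, of \<delta>]
      have c: "(subst (par_repl (subst l \<mu>) P (\<lambda>p. subst (snd (rls' p)) \<mu>)) \<delta>, subst (subst r \<mu>) \<delta>) \<in> cv C" .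
      have Pposs': "P \<subseteq> poss (subst l \<mu>)" using Pposs valid_pos_subst by (auto simp: poss_def)
      have "subst (par_repl (subst l \<mu>) P (\<lambda>p. subst (snd (rls' p)) \<mu>)) \<delta> =
            par_repl (subst (subst l \<mu>) \<delta>) P (\<lambda>p. subst (subst (snd (rls' p)) \<mu>) \<delta>)"
        by (rule par_repl_subst[OF Pposs'])
      also have "\<dots> = par_repl (subst l \<sigma>') P (\<lambda>p. subst (snd (rls p)) (\<theta> p))"
      proof -
        have "subst (subst l \<mu>) \<delta> = subst l \<sigma>'" by (simp add: subst_subst \<tau>eq eql)
        then show ?thesis by (simp only:) (rule par_repl_cong, auto simp: subst_subst \<tau>eq eqs)
      qed
      also have "\<dots> = u" using D(5) by simp
      finally have "subst (par_repl (subst l \<mu>) P (\<lambda>p. subst (snd (rls' p)) \<mu>)) \<delta> = u" .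
      moreover have "subst (subst r \<mu>) \<delta> = subst r \<sigma>'" by (simp add: subst_subst \<tau>eq eqr)
      ultimately show ?thesis using c by simp
    qed
    then have "(subst r \<sigma>', u) \<in> cv C" by (rule cv_sym)
    moreover have "(u, u) \<in> par Sa" by simp
    ultimately show ?thesis using tstep by blast
  qed
qed



lemma par_G:
  fixes R :: "('f, 'v) trs"
  assumes inf: "infinite (UNIV :: 'v set)" and wf: "wf_trs R" and ll: "left_linear R"
    and pcpC: "\<forall>(t, u) \<in> pcp R R. (t, u) \<in> cv C"
    and S1: "S1 \<subseteq> R" and S2: "S2 \<subseteq> R"
  shows "(s,t) \<in> par S1 \<Longrightarrow> (s,u) \<in> par S2 \<Longrightarrow> \<exists>v w. (t,v) \<in> par S2 \<and> (v,w) \<in> cv C \<and> (u,w) \<in> par S1"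
proof (induction arbitrary: u rule: par.induct)
  case (pvar x)
  from pvar show ?case
  proof (cases rule: par.cases)
    case (proot l2 r2 \<theta>)
    have "(l2, r2) \<in> R" using S2 proot(3) by auto
    then have "\<forall>y. l2 \<noteq> Var y" using wf unfolding wf_trs_def by fastforce
    then show ?thesis using proot(1) by (cases l2) auto
  qed (use par_refl cv_refl in blast)+
next
  case (pfun ss ts f)
  note outer_hyps = pfun.hyps pfun.IH
  from pfun.prems show ?case
  proof (cases rule: par.cases)
    case (pfun us)
    define n where "n = length ss"
    have ex: "\<forall>i\<in>{..<n}. \<exists>v w. (ts!i,v) \<in> par S2 \<and> (v,w) \<in> cv C \<and> (us!i,w) \<in> par S1"
    proof
      fix i assume "i \<in> {..<n}"
      then have i: "i < length ss" unfolding n_def by auto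
      have "(ss!i, us!i) \<in> par S2" using pfun i by auto
      then show "\<exists>v w. (ts!i,v) \<in> par S2 \<and> (v,w) \<in> cv C \<and> (us!i,w) \<in> par S1"
        using outer_hyps i by blast
    qed
    then have "\<exists>vf. \<forall>i\<in>{..<n}. \<exists>w. (ts!i, vf i) \<in> par S2 \<and> (vf i,w) \<in> cv C \<and> (us!i,w) \<in> par S1"
      by (rule bchoice)
    then obtain vf where "\<forall>i\<in>{..<n}. \<exists>w. (ts!i, vf i) \<in> par S2 \<and> (vf i,w) \<in> cv C \<and> (us!i,w) \<in> par S1"
      by blast
    then have "\<exists>wf. \<forall>i\<in>{..<n}. (ts!i, vf i) \<in> par S2 \<and> (vf i, wf i) \<in> cv C \<and> (us!i, wf i) \<in> par S1"
      by (rule bchoice)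
    then obtain wf where W: "\<forall>i\<in>{..<n}. (ts!i, vf i) \<in> par S2 \<and> (vf i, wf i) \<in> cv C \<and> (us!i, wf i) \<in> par S1"
      by blast
    have lens: "length ts = n" "length us = n" using pfun outer_hyps n_def by auto
    have "(Fun f ts, Fun f (map vf [0..<n])) \<in> par S2"
      by (rule par.pfun) (use W lens in auto)
    moreover have "(Fun f (map vf [0..<n]), Fun f (map wf [0..<n])) \<in> cv C"
      by (rule cv_args) (use W in auto)
    moreover have "(Fun f us, Fun f (map wf [0..<n])) \<in> par S1"
      by (rule par.pfun) (use W lens in auto)
    ultimately show ?thesis using pfun by auto
  next
    case (proot l2 r2 \<theta>)
    have st: "(subst l2 \<theta>, Fun f ts) \<in> par S1"
      using par.pfun[of ss ts S1 f] outer_hyps proot(1) by auto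
    obtain v w where vw: "(subst r2 \<theta>, v) \<in> par S1" "(v, w) \<in> cv C" "(Fun f ts, w) \<in> par S2"
      using overlap[OF inf wf ll pcpC S2 S1 proot(3) st] by blast
    then show ?thesis using proot(2) cv_sym by blast
  qed
next
  case (proot l r \<sigma>)
  show ?case using overlap[OF inf wf ll pcpC S1 S2 proot.hyps proot.prems] by blast
qed

theorem theorem8:
  fixes R :: "('f, 'v) trs"
  assumes "infinite (UNIV :: 'v set)"
    and "wf_trs R"
    and "left_linear R"
    and "\<exists>C \<subseteq> R. CR C \<and> (\<forall>(t, u) \<in> pcp R R. (t, u) \<in> conv C)"
  shows "CR R"
proof -
  obtain C where C: "C \<subseteq> R" "CR C" "\<forall>(t, u) \<in> pcp R R. (t, u) \<in> cv C"
    using assms(4) unfolding conv_cv by blast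
  show ?thesis
    by (rule CR_from_G[OF C(2) C(1)]) (rule par_G[OF assms(1-3) C(3)], assumption+)
qed

end
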